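(* Let $K=\mathbb{F}_2(t)$ and let $\omega=t$ or $\omega=t^{-1}$. Then \[\widehat{f_\omega H_\omega}(s;\mathbbm{1})=\frac12\cdot\frac{1-2^{-s}}{1-2^{1-s}},\quad\operatorname{Re}(s)>1.\]
   Context: $K_\omega$ is the completion of $K$ at $\omega$ ($K_t=\mathbb{F}_2((t))$, $K_{t^{-1}}=\mathbb{F}_2((t^{-1}))$), $\mathcal{O}_\omega$ its ring of integers, $\mathrm{d}y$ the Haar measure with $\mathcal{O}_\omega$ of volume $1$, $|y|_\omega=2^{-v_\omega(y)}$, $H_\omega(y)=\max\{1,|y|_\omega\}$. $f_\omega(y)=1$ if the conic $x_0^2+x_0x_1+yx_1^2=tx_2^2$ has a $K_\omega$-point and $0$ otherwise; $\widehat{f_\omega H_\omega}(s;\mathbbm{1})=\int_{K_\omega}f_\omega(y)H_\omega(y)^{-s}\,\mathrm{d}y$. *)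

theory Defs
  imports "HOL-Probability.Probability" "HOL-Library.Z2"
    "HOL-Computational_Algebra.Formal_Laurent_Series"
begin

text \<open>The field F_2 is the library type bit. Both completions K_t = F_2((t)) and
K_{t^-1} = F_2((t^-1)) are modelled as the field of formal Laurent series bit fls
in the local uniformizer u (u = t, resp. u = t^-1). The only place-dependent datum
is the element t of K itself: t = u for omega = t, and t = u^-1 for omega = t^-1.\<close>

type_synonym Kw = "bit fls"

datatype place = Place_t | Place_t_inv

definition t_in :: "place \<Rightarrow> Kw" where
  "t_in w = (case w of Place_t \<Rightarrow> fls_X | Place_t_inv \<Rightarrow> fls_X_inv)"

definition absw :: "Kw \<Rightarrow> real" where
  "absw y = (if y = 0 then 0 else 2 powr (- real_of_int (fls_subdegree y)))"

definition Hw :: "Kw \<Rightarrow> real" where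
  "Hw y = max 1 (absw y)"

definition conic_has_point :: "place \<Rightarrow> Kw \<Rightarrow> bool" where
  "conic_has_point w y \<longleftrightarrow> (\<exists>x0 x1 x2 :: Kw. (x0, x1, x2) \<noteq> (0, 0, 0) \<and>
      x0^2 + x0 * x1 + y * x1^2 = t_in w * x2^2)"

definition fw :: "place \<Rightarrow> Kw \<Rightarrow> real" where
  "fw w y = (if conic_has_point w y then 1 else 0)"

text \<open>The ring u^(-n) O is parametrised by coefficient sequences a : nat => bit via
a |-> u^(-n) * sum_i a_i u^i; with fair coin measure on the coefficients this gives
Haar measure of u^(-n) O normalised to total mass 1, so rescaling by 2^n gives
the Haar measure with vol(O) = 1 restricted to u^(-n) O.\<close>
definition Kw_space :: "Kw measure" where
  "Kw_space = sigma UNIV {{x. fls_nth x i = b} | i b. True}"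

definition coin :: "(nat \<Rightarrow> bit) measure" where
  "coin = PiM UNIV (\<lambda>_. measure_pmf (pmf_of_set (UNIV :: bit set)))"

definition emb :: "nat \<Rightarrow> (nat \<Rightarrow> bit) \<Rightarrow> Kw" where
  "emb n a = fls_shift (int n) (fps_to_fls (Abs_fps a))"

definition haar :: "Kw measure" where
  "haar = (SUP n :: nat. scale_measure (2 ^ n) (distr coin Kw_space (emb n)))"

end

theory Submission
  imports Defs
begin

unbundle fps_syntax

lemma bit_self_add [simp]: "(x::bit) + x = 0"
  by (cases x) auto

lemma bit_self_mult [simp]: "(x::bit) * x = x"
  by (cases x) auto

lemma fls_bit_self_add [simp]: "(x::bit fls) + x = 0"
  by (rule fls_eqI) simp

lemma sym_sum_bit:
  fixes g :: "int \<Rightarrow> bit"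
  assumes sym: "\<And>i. g (n - i) = g i"
  shows "(\<Sum>i=a..n-a. g i) = (if 2*a \<le> n \<and> even n then g (n div 2) else 0)"
proof (induction "nat (n - 2*a)" arbitrary: a rule: less_induct)
  case less
  show ?case
  proof (cases "n - 2*a \<le> 0")
    case True
    show ?thesis
    proof (cases "n = 2*a")
      case True
      then show ?thesis by simp
    next
      case False
      with True have "{a..n-a} = {}" by auto
      with False True show ?thesis by auto
    qed
  next
    case False
    have split: "{a..n-a} = insert a (insert (n-a) {a+1..n-(a+1)})" using False by auto
    have "(\<Sum>i=a..n-a. g i) = g a + g (n-a) + (\<Sum>i=a+1..n-(a+1). g i)"
    proof -
      have n1: "a \<notin> insert (n-a) {a+1..n-(a+1)}" and n2: "n-a \<notin> {a+1..n-(a+1)}"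
        using False by auto
      show ?thesis unfolding split
        by (simp only: sum.insert[OF _ n1] sum.insert[OF _ n2] finite_insert finite_atLeastAtMost_int add.assoc)
    qed
    also have "g (n-a) = g a" using sym[of a] .
    also have "(\<Sum>i=a+1..n-(a+1). g i) = (if 2*(a+1) \<le> n \<and> even n then g (n div 2) else 0)"
      using less[of "a+1"] False by simp
    finally show ?thesis using False by auto presburger?
  qed
qed

lemma fls_sq_nth:
  fixes x :: "bit fls"
  shows "(x * x) $$ k = (if even k then x $$ (k div 2) else 0)"
proof -
  define d where "d = fls_subdegree x"
  have "(x * x) $$ k = (\<Sum>i=d..k-d. x $$ i * x $$ (k - i))"
    unfolding d_def by (rule fls_times_nth(2))
  also have "\<dots> = (if 2*d \<le> k \<and> even k then x $$ (k div 2) * x $$ (k - k div 2) else 0)"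
    by (rule sym_sum_bit) (simp add: mult.commute)
  also have "\<dots> = (if even k then x $$ (k div 2) else 0)"
  proof (cases "even k")
    case True
    then have "k - k div 2 = k div 2" by auto
    moreover have "\<not> 2*d \<le> k \<Longrightarrow> x $$ (k div 2) = 0" unfolding d_def
      by (rule fls_eq0_below_subdegree) (use True in auto)
    ultimately show ?thesis using True by auto
  qed auto
  finally show ?thesis .
qed

lemma fls_sq_nth2: "((x::bit fls)^2) $$ k = (if even k then x $$ (k div 2) else 0)"
  by (simp add: power2_eq_square fls_sq_nth)

lemma fls_bit_two: "2 * (x::bit fls) = 0"
  by (simp add: mult_2)

lemma fls_bit_sq_add: "((a::bit fls) + b)^2 = a^2 + b^2"
  by (simp add: power2_sum mult.assoc fls_bit_two)

lemma fls_bit_uminus: "- (x::bit fls) = x"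
  by (rule fls_eqI) simp

lemma t_sq_nth:
  "(t_in w * z^2) $$ k = (case w of Place_t \<Rightarrow> (z^2) $$ (k - 1) | Place_t_inv \<Rightarrow> (z^2) $$ (k + 1))"
  by (cases w) (simp_all add: t_in_def fls_X_times_conv_shift fls_X_inv_times_conv_shift)

lemma t_sq_even: "even k \<Longrightarrow> (t_in w * (z::bit fls)^2) $$ k = 0"
  by (cases w) (simp_all add: t_sq_nth fls_sq_nth2)

lemma t_sq_zero: assumes "t_in w * (z::bit fls)^2 = 0" shows "z = 0"
proof (rule fls_eqI)
  fix j
  have "(t_in w * z^2) $$ (case w of Place_t \<Rightarrow> 2*j+1 | Place_t_inv \<Rightarrow> 2*j - 1) = z $$ j"
    by (cases w) (simp_all add: t_sq_nth fls_sq_nth2)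
  then show "z $$ j = 0 $$ j" using assms by simp
qed

lemma sq_zero: assumes "\<And>k. even k \<Longrightarrow> ((z::bit fls)^2) $$ k = 0" shows "z = 0"
proof (rule fls_eqI)
  fix j
  have "(z^2) $$ (2*j) = z $$ j" by (simp add: fls_sq_nth2)
  then show "z $$ j = 0 $$ j" using assms[of "2*j"] by simp
qed

lemma conic_imp: assumes "conic_has_point w y" shows "y $$ 0 = 0"
proof -
  obtain x0 x1 x2 :: "bit fls" where nz: "(x0, x1, x2) \<noteq> (0, 0, 0)"
    and eq: "x0^2 + x0 * x1 + y * x1^2 = t_in w * x2^2"
    using assms unfolding conic_has_point_def by blast
  show ?thesis
  proof (cases "x1 = 0")
    case True
    then have eq1: "x0^2 = t_in w * x2^2" using eq by (simp add: power2_eq_square)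
    have "x0 = 0"
      by (rule sq_zero) (simp add: eq1 t_sq_even)
    have "t_in w * x2^2 = 0" using eq1 \<open>x0 = 0\<close> by (metis zero_power2)
    then have "x2 = 0" by (rule t_sq_zero)
    with \<open>x0 = 0\<close> True nz show ?thesis by simp
  next
    case False
    define Z where "Z = x0 / x1"
    define W where "W = x2 / x1"
    have x0: "x0 = Z * x1" and x2: "x2 = W * x1" using False by (simp_all add: Z_def W_def)
    have "x1^2 * (Z^2 + Z + y) = x1^2 * (t_in w * W^2)"
    proof -
      have "x1^2 * (Z^2 + Z + y) = x0^2 + x0 * x1 + y * x1^2"
        unfolding x0 by (simp add: power2_eq_square ring_distribs mult_ac)
      also have "\<dots> = t_in w * x2^2" by (rule eq)
      also have "\<dots> = x1^2 * (t_in w * W^2)"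
        unfolding x2 by (simp add: power2_eq_square mult_ac)
      finally show ?thesis .
    qed
    then have "Z^2 + Z + y = t_in w * W^2"
      using False by (metis mult_left_cancel power_not_zero)
    then have "(Z^2 + Z + y) $$ 0 = 0" by (simp add: t_sq_even)
    then show ?thesis by (simp add: fls_sq_nth2)
  qed
qed

definition inG :: "place \<Rightarrow> bit fls \<Rightarrow> bool" where
  "inG w z \<longleftrightarrow> (\<exists>a b. z = a^2 + a + t_in w * b^2)"

lemma inG_0: "inG w 0"
  unfolding inG_def by (rule exI[of _ 0], rule exI[of _ 0]) simp

lemma inG_add: assumes "inG w z1" "inG w z2" shows "inG w (z1 + z2)"
proof -
  obtain a1 b1 a2 b2 where "z1 = a1^2 + a1 + t_in w * b1^2" "z2 = a2^2 + a2 + t_in w * b2^2"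
    using assms unfolding inG_def by blast
  then have "z1 + z2 = (a1+a2)^2 + (a1 + a2) + t_in w * (b1+b2)^2"
    by (simp add: fls_bit_sq_add algebra_simps)
  then show ?thesis unfolding inG_def by blast
qed

lemma inG_wp: "inG w (a^2 + a)"
  unfolding inG_def by (rule exI[of _ a], rule exI[of _ 0]) simp

lemma inG_t: "inG w (t_in w * b^2)"
  unfolding inG_def by (rule exI[of _ 0], rule exI[of _ b]) simp

lemma X_intpow_sq: "(fls_X_intpow j :: bit fls)^2 = fls_X_intpow (2*j)"
proof (rule fls_eqI)
  fix n :: int
  show "((fls_X_intpow j :: bit fls)^2) $$ n = fls_X_intpow (2*j) $$ n"
    by (cases "even n") (auto simp: fls_sq_nth2 elim!: evenE)
qed

lemma inG_monomial: "k \<noteq> 0 \<Longrightarrow> inG w (fls_X_intpow k)"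
proof (induction "nat \<bar>k\<bar>" arbitrary: k rule: less_induct)
  case less
  show ?case
  proof (cases "even k")
    case True
    then obtain j where k: "k = 2*j" by auto
    with less.prems have j0: "j \<noteq> 0" by auto
    have ih: "inG w (fls_X_intpow j)"
      using less.hyps[of j] j0 k by simp
    have eq: "fls_X_intpow k = ((fls_X_intpow j)^2 + fls_X_intpow j) + (fls_X_intpow j :: bit fls)"
      unfolding add.assoc fls_bit_self_add by (simp add: k X_intpow_sq)
    show ?thesis by (subst eq) (rule inG_add[OF inG_wp ih])
  next
    case False
    show ?thesis
    proof (cases w)
      case Place_t
      obtain m where m: "k = 2*m+1" using False by (auto elim!: oddE)
      have "fls_X_intpow k = t_in w * (fls_X_intpow m :: bit fls)^2"
      proof (rule fls_eqI)
        fix n :: int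
        show "fls_X_intpow k $$ n = (t_in w * (fls_X_intpow m :: bit fls)^2) $$ n"
        proof -
          have "(t_in w * (fls_X_intpow m :: bit fls)^2) $$ n = (if even (n-1) then (if (n-1) div 2 = m then 1 else 0) else 0)"
            by (simp add: Place_t t_sq_nth fls_sq_nth2)
          moreover have "(even (n-1) \<and> (n-1) div 2 = m) \<longleftrightarrow> n = k" using m by presburger
          ultimately show ?thesis by auto
        qed
      qed
      then show ?thesis using inG_t by metis
    next
      case Place_t_inv
      obtain m where m: "k = 2*m-1" proof - have "\<exists>m. k = 2*m-1" using False by (intro exI[of _ "(k+1) div 2"]) presburger then show ?thesis using that by blast qed
      have "fls_X_intpow k = t_in w * (fls_X_intpow m :: bit fls)^2"
      proof (rule fls_eqI)
        fix n :: int
        show "fls_X_intpow k $$ n = (t_in w * (fls_X_intpow m :: bit fls)^2) $$ n"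
        proof -
          have "(t_in w * (fls_X_intpow m :: bit fls)^2) $$ n = (if even (n+1) then (if (n+1) div 2 = m then 1 else 0) else 0)"
            by (simp add: Place_t_inv t_sq_nth fls_sq_nth2)
          moreover have "(even (n+1) \<and> (n+1) div 2 = m) \<longleftrightarrow> n = k" using m by presburger
          ultimately show ?thesis by (cases "even (n+1)"; cases "(n+1) div 2 = m"; simp)
        qed
      qed
      then show ?thesis using inG_t by metis
    qed
  qed
qed

fun aa :: "bit fls \<Rightarrow> nat \<Rightarrow> bit" where
  "aa y n = (if n = 0 then 0 else y $$ int n + (if even n then aa y (n div 2) else 0))"

declare aa.simps[simp del]

lemma inG_pos:
  assumes "\<And>k. k \<le> 0 \<Longrightarrow> y $$ k = 0"
  shows "inG w y"
proof -
  define a where "a = fps_to_fls (Abs_fps (aa y))"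
  have an: "a $$ k = (if k < 0 then 0 else aa y (nat k))" for k
    unfolding a_def by simp
  have "a^2 + a = y"
  proof (rule fls_eqI)
    fix k :: int
    show "(a^2 + a) $$ k = y $$ k"
    proof (cases "k \<le> 0")
      case True
      then show ?thesis using assms[of k] 
        by (auto simp: fls_sq_nth2 an aa.simps)
    next
      case False
      then have "nat k \<noteq> 0" by simp
      moreover have "even (nat k) \<longleftrightarrow> even k" using False by (simp add: even_nat_iff)
      moreover have "nat (k div 2) = nat k div 2" using False by (simp add: nat_div_distrib)
      ultimately have "a $$ k = y $$ k + (if even k then a $$ (k div 2) else 0)"
        using False an[of k] an[of "k div 2"] aa.simps[of y "nat k"] by simp
      then show ?thesis by (simp add: fls_sq_nth2 add.assoc[symmetric])
    qed
  qed
  then show ?thesis using inG_wp by metis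
qed

lemma inG_main: "y $$ 0 = 0 \<Longrightarrow> inG w y"
proof (induction "nat (- fls_subdegree y)" arbitrary: y rule: less_induct)
  case less
  show ?case
  proof (cases "fls_subdegree y \<ge> 0")
    case True
    show ?thesis
    proof (rule inG_pos)
      fix k :: int assume "k \<le> 0"
      then show "y $$ k = 0" using True less.prems
        by (cases "k = 0") auto
    qed
  next
    case False
    define d where "d = fls_subdegree y"
    have d0: "d < 0" using False d_def by simp
    have yd: "y $$ d = 1" using False d_def
      by (metis bit_not_zero_iff nth_fls_subdegree_zero_iff fls_zero_subdegree order_refl)
    define y' where "y' = y + fls_X_intpow d"
    have y'n: "y' $$ k = (if k = d then 0 else y $$ k)" for k
      unfolding y'_def using yd by simp
    have y'0: "y' $$ 0 = 0" using y'n[of 0] less.prems d0 by simp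
    have "inG w y'"
    proof (cases "y' = 0")
      case True then show ?thesis by (simp add: inG_0)
    next
      case False
      have "d < fls_subdegree y'"
      proof (rule ccontr)
        assume "\<not> d < fls_subdegree y'"
        then have "fls_subdegree y' < d \<or> fls_subdegree y' = d" by auto
        then have "y' $$ fls_subdegree y' = 0"
          using y'n d_def by auto
        with False show False by simp
      qed
      then have "nat (- fls_subdegree y') < nat (- fls_subdegree y)"
        using d0 d_def by simp
      then show ?thesis using less.hyps y'0 by blast
    qed
    moreover have "y = y' + fls_X_intpow d"
      unfolding y'_def by (simp add: add.assoc)
    ultimately show ?thesis using inG_add inG_monomial d0 by (metis less_irrefl)
  qed
qed

lemma conic_iff: "conic_has_point w y \<longleftrightarrow> y $$ 0 = 0"
proof
  assume "conic_has_point w y" then show "y $$ 0 = 0" by (rule conic_imp)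
next
  assume "y $$ 0 = 0"
  then obtain a b where y: "y = a^2 + a + t_in w * b^2"
    using inG_main unfolding inG_def by blast
  have "a^2 + a * 1 + y * 1^2 = t_in w * b^2"
    unfolding y by (simp flip: add.assoc)
  then show "conic_has_point w y" unfolding conic_has_point_def
    by (intro exI[of _ a] exI[of _ 1] exI[of _ b]) simp
qed

abbreviation U :: "bit measure" where "U \<equiv> measure_pmf (pmf_of_set (UNIV :: bit set))"

lemma UNIV_bit': "(UNIV :: bit set) = {0, 1}"
  by auto

lemma U_single: "emeasure U {b} = ennreal (1/2)"
proof -
  have "card (UNIV :: bit set) = 2" "finite (UNIV :: bit set)" by (simp_all add: UNIV_bit')
  then show ?thesis
    by (subst emeasure_pmf_of_set) (auto simp: ennreal_divide_numeral[symmetric] divide_ennreal)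
qed

lemma prob_U: "prob_space U" by (rule prob_space_measure_pmf)

lemma space_coin: "space coin = UNIV"
  by (simp add: coin_def space_PiM)

lemma sets_coord: "{a. P (a j)} \<in> sets coin"
proof -
  have "(\<lambda>a. a j) \<in> measurable coin U"
    unfolding coin_def by (rule measurable_component_singleton) simp
  then have "(\<lambda>a. a j) -` {x. P x} \<inter> space coin \<in> sets coin"
    by (rule measurable_sets) simp
  then show ?thesis by (simp add: space_coin)
qed

lemma tl_meas: "(\<lambda>a. \<lambda>n. a (Suc n)) \<in> measurable coin coin"
  unfolding coin_def
  by (rule measurable_PiM_single') (auto intro: measurable_component_singleton)

lemma coin_split0:
  assumes S: "S \<in> sets coin"
  shows "emeasure coin {a. a 0 = b \<and> (\<lambda>n. a (Suc n)) \<in> S} = ennreal (1/2) * emeasure coin S"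
proof -
  define I where "I = UNIV - {0::nat}"
  define P where "P = PiM I (\<lambda>_. U)"
  have ins: "insert 0 I = UNIV" unfolding I_def by auto
  have D: "distr (U \<Otimes>\<^sub>M P) coin (\<lambda>(x, X). X(0 := x)) = coin"
    using distr_pair_PiM_eq_PiM[of I "\<lambda>_. U" 0] prob_U unfolding coin_def P_def ins by simp
  have Fm: "(\<lambda>(x, X). X(0 := x)) \<in> measurable (U \<Otimes>\<^sub>M P) coin"
  proof -
    have "(\<lambda>(x, X). X(0 := x)) \<in> measurable (U \<Otimes>\<^sub>M P) (PiM (insert 0 I) (\<lambda>_. U))"
      unfolding P_def by measurable
    then show ?thesis unfolding coin_def ins .
  qed
  define T where "T = {a. a 0 = b \<and> (\<lambda>n. a (Suc n)) \<in> S}"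
  have T: "T \<in> sets coin"
  proof -
    have "T = {a. a 0 = b} \<inter> ((\<lambda>a. \<lambda>n. a (Suc n)) -` S \<inter> space coin)"
      unfolding T_def space_coin by auto
    then show ?thesis using sets_coord[of "\<lambda>x. x = b" 0] measurable_sets[OF tl_meas S] by auto
  qed
  define B where "B = {X \<in> space P. (\<lambda>n. X (Suc n)) \<in> S}"
  have pre: "(\<lambda>(x, X). X(0 := x)) -` T \<inter> space (U \<Otimes>\<^sub>M P) = {b} \<times> B"
    unfolding T_def B_def by (auto simp: space_pair_measure)
  have G: "distr P coin (\<lambda>X. \<lambda>n\<in>UNIV. X (Suc n)) = coin"
    using distr_PiM_reindex[of "UNIV - {0}" "\<lambda>_. U" Suc UNIV] prob_U unfolding coin_def P_def I_def
    by simp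
  have Gm: "(\<lambda>X. \<lambda>n\<in>UNIV. X (Suc n)) \<in> measurable P coin"
    unfolding coin_def P_def I_def
    by (rule measurable_PiM_single') (auto intro: measurable_component_singleton)
  have "emeasure coin S = emeasure (distr P coin (\<lambda>X. \<lambda>n\<in>UNIV. X (Suc n))) S"
    using G by simp
  also have "\<dots> = emeasure P B"
    using Gm S by (simp add: emeasure_distr B_def restrict_UNIV) (metis Int_commute Collect_conj_eq Collect_mem_eq vimage_def)
  finally have SB: "emeasure coin S = emeasure P B" .
  have Bs: "B \<in> sets P"
    using measurable_sets[OF Gm S] unfolding B_def by (simp add: restrict_UNIV vimage_def Int_def conj_commute)
  interpret P: prob_space P unfolding P_def by (rule prob_space_PiM) (rule prob_U)
  have "emeasure coin T = emeasure (distr (U \<Otimes>\<^sub>M P) coin (\<lambda>(x, X). X(0 := x))) T"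
    using D by simp
  also have "\<dots> = emeasure (U \<Otimes>\<^sub>M P) ({b} \<times> B)"
    using Fm T by (simp add: emeasure_distr pre)
  also have "\<dots> = emeasure U {b} * emeasure P B"
    using Bs by (intro P.emeasure_pair_measure_Times) auto
  finally show ?thesis unfolding T_def using SB U_single by simp
qed

definition Cset :: "nat \<Rightarrow> nat \<Rightarrow> (nat \<Rightarrow> bit) set" where
  "Cset k n = {a. a (k+n) = 0 \<and> (\<forall>j<k. a j = 0) \<and> (0 < n \<longrightarrow> a k = 1)}"

lemma Cset_Suc: "Cset (Suc k) n = {a. a 0 = 0 \<and> (\<lambda>m. a (Suc m)) \<in> Cset k n}"
  unfolding Cset_def by (auto simp: less_Suc_eq_0_disj)

lemma half_mult: "0 \<le> x \<Longrightarrow> ennreal (1/2) * ennreal x = ennreal (1/2 * x)"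
  by (rule ennreal_mult'[symmetric]) simp

lemma half_half: "ennreal (1/2) * X + ennreal (1/2) * X = X"
proof -
  have h: "ennreal (1/2) + ennreal (1/2) = 1" by (subst ennreal_plus[symmetric]) auto
  show ?thesis by (simp only: distrib_right[symmetric] h mult_1)
qed

lemma prob_coin: "prob_space coin"
  unfolding coin_def by (rule prob_space_PiM) (rule prob_U)

lemma coin_UNIV: "emeasure coin UNIV = 1"
  using prob_space.emeasure_space_1[OF prob_coin] by (simp add: space_coin)

lemma coin_coord: "emeasure coin {a. a j = b} = ennreal (1/2)"
proof (induction j arbitrary: b)
  case 0
  have "{a. a 0 = b} = {a. a 0 = b \<and> (\<lambda>n. a (Suc n)) \<in> UNIV}" by simp
  also have "emeasure coin \<dots> = ennreal (1/2) * emeasure coin UNIV"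
    by (rule coin_split0) (metis sets.top space_coin)
  finally show ?case by (simp add: coin_UNIV)
next
  case (Suc j)
  define S where "S = {c :: nat \<Rightarrow> bit. c j = b}"
  have S: "S \<in> sets coin" unfolding S_def by (rule sets_coord)
  have eq: "{a. a (Suc j) = b} = {a. a 0 = 0 \<and> (\<lambda>n. a (Suc n)) \<in> S} \<union> {a. a 0 = 1 \<and> (\<lambda>n. a (Suc n)) \<in> S}"
    unfolding S_def by auto
  have m0: "{a. a 0 = 0 \<and> (\<lambda>n. a (Suc n)) \<in> S} \<in> sets coin"
    using sets_coord[of "\<lambda>x. x = 0" 0] measurable_sets[OF tl_meas S]
    by (auto simp: space_coin Collect_conj_eq vimage_def)
  have m1: "{a. a 0 = 1 \<and> (\<lambda>n. a (Suc n)) \<in> S} \<in> sets coin"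
    using sets_coord[of "\<lambda>x. x = 1" 0] measurable_sets[OF tl_meas S]
    by (auto simp: space_coin Collect_conj_eq vimage_def)
  have "emeasure coin {a. a (Suc j) = b} = emeasure coin {a. a 0 = 0 \<and> (\<lambda>n. a (Suc n)) \<in> S}
      + emeasure coin {a. a 0 = 1 \<and> (\<lambda>n. a (Suc n)) \<in> S}"
    unfolding eq by (rule plus_emeasure[symmetric]) (use m0 m1 in auto)
  also have "\<dots> = ennreal (1/2) * emeasure coin S + ennreal (1/2) * emeasure coin S"
    using coin_split0[OF S, of 0] coin_split0[OF S, of 1] by simp
  also have "\<dots> = emeasure coin S"
    by (rule half_half)
  finally show ?case using Suc[of b] by (simp add: S_def)
qed

lemma Cset_meas:
  "Cset k n \<in> sets coin \<and> emeasure coin (Cset k n) = ennreal ((1/2)^(k + 1 + (if 0 < n then 1 else 0)))"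
proof (induction k)
  case 0
  show ?case
  proof (cases "n = 0")
    case True
    have eq: "Cset 0 n = {a. a 0 = 0 \<and> (\<lambda>m. a (Suc m)) \<in> UNIV}" unfolding Cset_def True by simp
    have "emeasure coin (Cset 0 n) = ennreal (1/2) * emeasure coin UNIV"
      unfolding eq by (rule coin_split0) (metis sets.top space_coin)
    moreover have "Cset 0 n \<in> sets coin" unfolding eq using sets_coord[of "\<lambda>x. x = 0" 0] by simp
    ultimately show ?thesis using True by (simp add: coin_UNIV)
  next
    case False
    define S where "S = {c :: nat \<Rightarrow> bit. c (n - 1) = 0}"
    have S: "S \<in> sets coin" unfolding S_def by (rule sets_coord)
    have eq: "Cset 0 n = {a. a 0 = 1 \<and> (\<lambda>m. a (Suc m)) \<in> S}"
      unfolding Cset_def S_def using False by (auto simp: Suc_pred')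
    have "emeasure coin (Cset 0 n) = ennreal (1/2) * emeasure coin S"
      unfolding eq by (rule coin_split0[OF S])
    also have "\<dots> = ennreal (1/2) * ennreal (1/2)" unfolding S_def by (simp add: coin_coord)
    also have "\<dots> = ennreal ((1/2)^(0 + 1 + (if 0 < n then 1 else 0)))"
    proof -
      have r: "(1/2::real)^(0+1+(if 0<n then 1 else 0)) = 1/2 * (1/2)" using False by simp
      show ?thesis by (subst r, rule ennreal_mult''[symmetric]) simp
    qed
    finally show ?thesis using sets_coord[of "\<lambda>x. x = 1" 0] measurable_sets[OF tl_meas S]
      by (simp add: eq space_coin Collect_conj_eq vimage_def)
  qed
next
  case (Suc k)
  then have S: "Cset k n \<in> sets coin" by simp
  have "emeasure coin (Cset (Suc k) n) = ennreal (1/2) * emeasure coin (Cset k n)"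
    unfolding Cset_Suc by (rule coin_split0[OF S])
  also have "\<dots> = ennreal ((1/2)^(Suc k + 1 + (if 0 < n then 1 else 0)))"
  proof -
    have e: "emeasure coin (Cset k n) = ennreal ((1/2)^(k + 1 + (if 0 < n then 1 else 0)))"
      using Suc by simp
    have r: "1/2 * (1/2::real)^(k + 1 + (if 0 < n then 1 else 0)) = (1/2)^(Suc k + 1 + (if 0 < n then 1 else 0))"
      by simp
    show ?thesis unfolding e r[symmetric] by (rule half_mult) simp
  qed
  finally show ?case using sets_coord[of "\<lambda>x. x = 0" 0] measurable_sets[OF tl_meas S]
    by (simp add: Cset_Suc space_coin Collect_conj_eq vimage_def)
qed

lemma sets_Kw: "sets Kw_space = sigma_sets UNIV {{x. fls_nth x i = b} | i b. True}"
  unfolding Kw_space_def by (rule sets_measure_of) simp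

lemma space_Kw: "space Kw_space = UNIV"
  unfolding Kw_space_def by simp

lemma Kw_gen: "{x. fls_nth x i = b} \<in> sets Kw_space"
  unfolding sets_Kw by (rule sigma_sets.Basic) blast

lemma emb_nth: "emb m a $$ i = (if i + int m < 0 then 0 else a (nat (i + int m)))"
  by (simp add: emb_def)

lemma emb_meas: "emb m \<in> measurable coin Kw_space"
proof (rule measurable_sigma_sets[OF sets_Kw])
  fix y :: "bit fls set" assume "y \<in> {{x. fls_nth x i = b} | i b. True}"
  then obtain i b where y: "y = {x. fls_nth x i = b}" by blast
  have "emb m -` y \<inter> space coin = {a. (\<lambda>x. (if i + int m < 0 then 0 else x) = b) (a (nat (i + int m)))}"
    unfolding y space_coin by (auto simp: emb_nth)
  then show "emb m -` y \<inter> space coin \<in> sets coin" using sets_coord by simp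
qed auto

lemma emb_Suc: "a 0 = 0 \<Longrightarrow> emb (Suc m) a = emb m (\<lambda>n. a (Suc n))"
proof (rule fls_eqI)
  fix i :: int assume a0: "a 0 = 0"
  show "emb (Suc m) a $$ i = emb m (\<lambda>n. a (Suc n)) $$ i"
  proof (cases "i + int m < 0")
    case True
    then show ?thesis using a0 by (auto simp: emb_nth)
  next
    case False
    then have "nat (i + int (Suc m)) = Suc (nat (i + int m))" by simp
    then show ?thesis using False by (simp add: emb_nth)
  qed
qed

definition mu :: "nat \<Rightarrow> Kw measure" where
  "mu m = scale_measure (2 ^ m) (distr coin Kw_space (emb m))"

lemma haar_mu: "haar = (SUP m. mu m)"
  unfolding haar_def mu_def ..

lemma sets_mu: "sets (mu m) = sets Kw_space"
  unfolding mu_def by simp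

lemma two_pow_ennreal: "(2::ennreal)^n = ennreal (2^n)"
  by (metis ennreal_numeral ennreal_power zero_le_numeral)

lemma emeasure_mu: "A \<in> sets Kw_space \<Longrightarrow> emeasure (mu m) A = ennreal (2^m) * emeasure coin (emb m -` A)"
  unfolding mu_def using emb_meas
  by (simp add: emeasure_distr space_coin two_pow_ennreal)

lemma mu_mono_Suc: "mu m \<le> mu (Suc m)"
proof -
  have le: "emeasure (mu m) A \<le> emeasure (mu (Suc m)) A" for A
  proof (cases "A \<in> sets Kw_space")
    case False
    then show ?thesis by (simp add: emeasure_notin_sets sets_mu)
  next
    case True
    define E where "E = emb m -` A"
    have E: "E \<in> sets coin" using measurable_sets[OF emb_meas True] unfolding E_def by (simp add: space_coin)
    have sub: "{a. a 0 = 0 \<and> (\<lambda>n. a (Suc n)) \<in> E} \<subseteq> emb (Suc m) -` A"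
      unfolding E_def using emb_Suc by auto
    have "emeasure (mu m) A = ennreal (2^m) * emeasure coin E"
      using True by (simp add: emeasure_mu E_def)
    also have "\<dots> = ennreal (2^Suc m) * (ennreal (1/2) * emeasure coin E)"
    proof -
      have "ennreal (2^Suc m) * ennreal (1/2) = ennreal (2^m)"
        by (subst ennreal_mult''[symmetric]) auto
      then show ?thesis by (simp only: mult.assoc[symmetric])
    qed
    also have "\<dots> = ennreal (2^Suc m) * emeasure coin {a. a 0 = 0 \<and> (\<lambda>n. a (Suc n)) \<in> E}"
      using coin_split0[OF E, of 0] by simp
    also have "\<dots> \<le> ennreal (2^Suc m) * emeasure coin (emb (Suc m) -` A)"
    proof -
      have "emb (Suc m) -` A \<in> sets coin"
        using measurable_sets[OF emb_meas True, of "Suc m"] by (simp add: space_coin)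
      then show ?thesis using sub by (intro mult_left_mono emeasure_mono) auto
    qed
    also have "\<dots> = emeasure (mu (Suc m)) A"
      using True by (simp add: emeasure_mu)
    finally show ?thesis .
  qed
  show ?thesis
    unfolding le_measure_iff using sets_mu[of m] sets_mu[of "Suc m"] le
    by (auto simp: le_fun_def dest: sets_eq_imp_space_eq)
qed

lemma mu_mono: "mono mu"
  unfolding mono_iff_le_Suc using mu_mono_Suc by blast

lemma mu_chain: "Complete_Partial_Order.chain (\<le>) (range mu)"
  unfolding Complete_Partial_Order.chain_def
  using mu_mono by (auto simp: mono_def) (meson nat_le_linear)

lemma sets_haar: "sets haar = sets Kw_space"
  unfolding haar_mu by (rule sets_SUP) (auto simp: sets_mu)

lemma space_haar: "space haar = UNIV"
  using sets_eq_imp_space_eq[OF sets_haar] space_Kw by simp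

lemma emeasure_haar: "A \<in> sets Kw_space \<Longrightarrow> emeasure haar A = (SUP m. emeasure (mu m) A)"
  unfolding haar_mu by (rule emeasure_SUP_chain) (auto simp: sets_mu mu_chain)

definition Bset :: "nat \<Rightarrow> Kw set" where
  "Bset n = {y. y $$ 0 = 0 \<and> (\<forall>i < - int n. y $$ i = 0) \<and> (0 < n \<longrightarrow> y $$ (- int n) = 1)}"

definition val :: "nat \<Rightarrow> real" where
  "val n = 2^n * (1/2)^(1 + (if 0 < n then 1 else 0))"

lemma Bset_sets: "Bset n \<in> sets Kw_space"
proof -
  have eq: "Bset n = {y. y $$ 0 = 0} \<inter> (\<Inter>i\<in>{..< - int n}. {y. y $$ i = 0}) \<inter>
      (if 0 < n then {y. y $$ (- int n) = 1} else UNIV)"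
    unfolding Bset_def by auto
  have U: "UNIV \<in> sets Kw_space" using sets.top[of Kw_space] by (simp add: space_Kw)
  have "(\<Inter>i\<in>{..< - int n}. {y. y $$ i = 0}) \<in> sets Kw_space"
    by (rule sets.countable_INT''[OF U]) (auto intro: Kw_gen countableI_type)
  then show ?thesis unfolding eq using Kw_gen U by auto
qed

lemma emb_Bset: "emb m a \<in> Bset n \<longleftrightarrow> (n \<le> m \<and> a \<in> Cset (m - n) n)"
proof
  assume B: "emb m a \<in> Bset n"
  have nm: "n \<le> m"
  proof (rule ccontr)
    assume "\<not> n \<le> m"
    then have "emb m a $$ (- int n) = 0" "0 < n" by (auto simp: emb_nth)
    then show False using B unfolding Bset_def by auto
  qed
  have "a (m - n + n) = 0" using B nm unfolding Bset_def by (auto simp: emb_nth)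
  moreover have "\<forall>j<m-n. a j = 0"
  proof (intro allI impI)
    fix j assume j: "j < m - n"
    have "emb m a $$ (int j - int m) = 0" using B j unfolding Bset_def by auto
    then show "a j = 0" by (simp add: emb_nth)
  qed
  moreover have "0 < n \<longrightarrow> a (m - n) = 1"
  proof -
    have e: "nat (int m - int n) = m - n" "nat (- int n + int m) = m - n" using nm by (simp_all add: nat_diff_distrib')
    show ?thesis using B nm e unfolding Bset_def by (auto simp: emb_nth)
  qed
  ultimately show "n \<le> m \<and> a \<in> Cset (m - n) n" using nm unfolding Cset_def by auto
next
  assume "n \<le> m \<and> a \<in> Cset (m - n) n"
  then have nm: "n \<le> m" and a: "a m = 0" "\<forall>j<m-n. a j = 0" "0 < n \<longrightarrow> a (m - n) = 1"
    unfolding Cset_def by auto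
  have "emb m a $$ i = 0" if "i < - int n" for i
  proof (cases "i + int m < 0")
    case False
    then have "nat (i + int m) < m - n" using that nm by linarith
    then show ?thesis using a(2) False by (simp add: emb_nth)
  qed (simp add: emb_nth)
  moreover have "0 < n \<longrightarrow> emb m a $$ (- int n) = 1"
    using a(3) nm by (auto simp: emb_nth nat_diff_distrib)
  ultimately show "emb m a \<in> Bset n" using a(1) unfolding Bset_def by (simp add: emb_nth)
qed

lemma mu_Bset: "emeasure (mu m) (Bset n) = (if n \<le> m then ennreal (val n) else 0)"
proof -
  have pre: "emb m -` Bset n = (if n \<le> m then Cset (m - n) n else {})"
    using emb_Bset by auto
  show ?thesis
  proof (cases "n \<le> m")
    case False
    then show ?thesis by (simp add: emeasure_mu Bset_sets pre)
  next
    case True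
    then obtain k where m: "m = n + k" using le_Suc_ex by blast
    have r: "2^m * (1/2::real)^(m - n + 1 + (if 0 < n then 1 else 0)) = val n"
    proof -
      have "(2::real)^k * (1/2)^k = 1" by (simp add: power_mult_distrib[symmetric])
      then show ?thesis unfolding m val_def by (simp add: power_add)
    qed
    have "emeasure (mu m) (Bset n) = ennreal (2^m) * ennreal ((1/2)^(m - n + 1 + (if 0 < n then 1 else 0)))"
      using True Cset_meas by (simp add: emeasure_mu Bset_sets pre)
    also have "\<dots> = ennreal (2^m * (1/2::real)^(m - n + 1 + (if 0 < n then 1 else 0)))"
      by (rule ennreal_mult''[symmetric]) simp
    also have "\<dots> = ennreal (val n)" by (simp only: r)
    finally show ?thesis using True by simp
  qed
qed

lemma haar_Bset: "emeasure haar (Bset n) = ennreal (val n)"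
proof -
  have "emeasure haar (Bset n) = (SUP m. (if n \<le> m then ennreal (val n) else 0))"
    by (simp add: emeasure_haar Bset_sets mu_Bset)
  also have "\<dots> = ennreal (val n)"
  proof (rule antisym)
    show "(SUP m. (if n \<le> m then ennreal (val n) else 0)) \<le> ennreal (val n)"
      by (rule SUP_least) auto
    show "ennreal (val n) \<le> (SUP m. (if n \<le> m then ennreal (val n) else 0))"
      by (rule SUP_upper2[of n]) auto
  qed
  finally show ?thesis .
qed

lemma val_nonneg: "0 \<le> val n" by (simp add: val_def)

lemma measure_haar_Bset: "measure haar (Bset n) = val n"
  by (simp add: measure_def haar_Bset val_nonneg)

lemma Bset_iff: "y \<in> Bset n \<longleftrightarrow> y $$ 0 = 0 \<and> nat (- fls_subdegree y) = n"
proof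
  assume B: "y \<in> Bset n"
  show "y $$ 0 = 0 \<and> nat (- fls_subdegree y) = n"
  proof (cases "n = 0")
    case True
    then have "0 \<le> fls_subdegree y" using B unfolding Bset_def by (intro fls_subdegree_ge0I) auto
    then show ?thesis using B True unfolding Bset_def by auto
  next
    case False
    then have "fls_subdegree y = - int n" using B unfolding Bset_def
      by (intro fls_subdegree_eqI) auto
    then show ?thesis using B unfolding Bset_def by auto
  qed
next
  assume A: "y $$ 0 = 0 \<and> nat (- fls_subdegree y) = n"
  show "y \<in> Bset n"
  proof (cases "n = 0")
    case True
    then show ?thesis using A unfolding Bset_def by auto
  next
    case False
    then have d: "fls_subdegree y = - int n" using A by auto
    then have "y \<noteq> 0" using False by auto
    then have "y $$ (- int n) = 1" using d by (metis bit_not_zero_iff nth_fls_subdegree_nonzero)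
    then show ?thesis using A d unfolding Bset_def by auto
  qed
qed

lemma Hw_eq: "Hw y = 2 ^ nat (- fls_subdegree y)"
proof (cases "y = 0")
  case True then show ?thesis by (simp add: Hw_def absw_def)
next
  case False
  show ?thesis
  proof (cases "fls_subdegree y \<ge> 0")
    case True
    then have "2 powr (- real_of_int (fls_subdegree y)) \<le> 1"
      using powr_mono[of "- real_of_int (fls_subdegree y)" 0 "2::real"] by simp
    then show ?thesis using False True by (simp add: Hw_def absw_def)
  next
    case ng: False
    have "2 powr (- real_of_int (fls_subdegree y)) = 2 powr (real (nat (- fls_subdegree y)))"
      using ng by simp
    also have "\<dots> = 2 ^ nat (- fls_subdegree y)" by (rule powr_realpow) simp
    finally have e: "2 powr (- real_of_int (fls_subdegree y)) = 2 ^ nat (- fls_subdegree y)" .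
    have "(1::real) \<le> 2 ^ nat (- fls_subdegree y)" by simp
    then show ?thesis using False by (simp add: Hw_def absw_def e)
  qed
qed

lemma cpow_two_pow: "complex_of_real (2 ^ k) powr w = (2 powr w) ^ k"
proof -
  have l: "ln ((2::complex) ^ k) = of_nat k * ln 2"
  proof -
    have "ln (complex_of_real (2 ^ k)) = complex_of_real (ln (2 ^ k))" by (rule Ln_of_real) simp
    moreover have "ln (complex_of_real 2) = complex_of_real (ln 2)" by (rule Ln_of_real) simp
    ultimately show ?thesis by (simp add: ln_realpow)
  qed
  have "complex_of_real (2 ^ k) = (2::complex) ^ k" by simp
  moreover have "((2::complex) ^ k) powr w = exp (of_nat k * (w * ln 2))"
    by (simp add: powr_def l mult_ac)
  moreover have "exp (of_nat k * (w * ln 2)) = (2 powr w) ^ k"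
    by (simp add: exp_of_nat_mult powr_def)
  ultimately show ?thesis by simp
qed

lemma fw_eq: "fw w y = (if y $$ 0 = 0 then 1 else 0)"
  by (simp add: fw_def conic_iff)

lemma two_powr_one: "(2::complex) powr 1 = 2"
  using powr_nat'[of 2 1] by simp

theorem lemma4p3:
  fixes w :: place and s :: complex
  assumes "1 < Re s"
  shows "integrable haar (\<lambda>y. complex_of_real (fw w y) * complex_of_real (Hw y) powr (- s))
    \<and> (\<integral>y. complex_of_real (fw w y) * complex_of_real (Hw y) powr (- s) \<partial>haar)
        = 1 / 2 * ((1 - 2 powr (- s)) / (1 - 2 powr (1 - s)))"
proof -
  define r0 :: complex where "r0 = 2 powr (- s)"
  define q where "q = norm r0"
  define f where "f n y = indicator (Bset n) y *\<^sub>R r0 ^ n" for n and y :: Kw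
  have q: "q = 2 powr (- Re s)"
    unfolding q_def r0_def by (subst norm_powr_real_powr) auto
  have q2: "2 * q < 1"
  proof -
    have "2 * q = 2 powr (1 - Re s)" unfolding q by (simp add: powr_mult_base)
    also have "\<dots> < 2 powr 0" using assms by (intro powr_less_mono) auto
    finally show ?thesis by simp
  qed
  have q0: "0 \<le> q" unfolding q_def by simp
  have r: "2 powr (1 - s) = 2 * r0"
    unfolding r0_def using powr_add[of "2::complex" 1 "- s"] by (simp add: two_powr_one)
  have nr: "norm (2 * r0) < 1" using q2 unfolding q_def by (simp add: norm_mult)
  have g_eq: "complex_of_real (fw w y) * complex_of_real (Hw y) powr (- s) = (\<Sum>n. f n y)" for y
  proof -
    define N where "N = nat (- fls_subdegree y)"
    have H: "complex_of_real (Hw y) powr (- s) = r0 ^ N"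
      unfolding Hw_eq N_def r0_def by (rule cpow_two_pow)
    show ?thesis
    proof (cases "y $$ 0 = 0")
      case True
      have "f n y = (if n = N then r0 ^ N else 0)" for n
        unfolding f_def using True by (auto simp: Bset_iff N_def)
      then have "(\<Sum>n. f n y) = r0 ^ N"
        using sums_single[of N "\<lambda>_. r0 ^ N"] by (simp add: sums_iff)
      then show ?thesis using True by (simp add: fw_eq H)
    next
      case False
      have "f n y = 0" for n unfolding f_def using False by (simp add: Bset_iff)
      then show ?thesis using False by (simp add: fw_eq)
    qed
  qed
  have sets_B: "Bset n \<in> sets haar" for n using Bset_sets sets_haar by simp
  have fin_B: "emeasure haar (Bset n) < \<infinity>" for n by (simp add: haar_Bset)
  have int_f: "integrable haar (f n)" for n
    unfolding f_def using sets_B fin_B by (intro integrable_scaleR_left integrable_real_indicator)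
  have integral_f: "integral\<^sup>L haar (f n) = complex_of_real (val n) * r0 ^ n" for n
    unfolding f_def using sets_B fin_B
    by (simp add: space_haar measure_haar_Bset scaleR_conv_of_real)
  have norm_f: "(\<lambda>y. norm (f n y)) = (\<lambda>y. indicator (Bset n) y *\<^sub>R q ^ n)" for n
    unfolding f_def q_def by (auto simp: norm_power indicator_def)
  have int_norm: "(\<integral>y. norm (f n y) \<partial>haar) = val n * q ^ n" for n
    unfolding norm_f using sets_B fin_B by (simp add: space_haar measure_haar_Bset)
  have summ1: "AE y in haar. summable (\<lambda>i. norm (f i y))"
  proof (rule AE_I2)
    fix y :: Kw
    define N where "N = nat (- fls_subdegree y)"
    have "(\<lambda>i. norm (f i y)) = (\<lambda>i. if i = N then norm (f N y) else 0)"
      by (auto simp: f_def Bset_iff N_def)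
    then show "summable (\<lambda>i. norm (f i y))" by simp
  qed
  have summ2: "summable (\<lambda>i. \<integral>y. norm (f i y) \<partial>haar)"
    unfolding int_norm
  proof (rule summable_comparison_test)
    show "\<exists>N. \<forall>n\<ge>N. norm (val n * q ^ n) \<le> (2 * q) ^ n"
    proof (intro exI allI impI)
      fix n :: nat
      have "val n \<le> 2 ^ n" unfolding val_def by (simp add: power_le_one mult_left_le)
      then have "val n * q ^ n \<le> 2 ^ n * q ^ n" using q0 by (intro mult_right_mono) auto
      then show "norm (val n * q ^ n) \<le> (2 * q) ^ n"
        using val_nonneg[of n] q0 by (simp add: power_mult_distrib)
    qed
    show "summable (\<lambda>n. (2 * q) ^ n)" using q2 q0 by (intro summable_geometric) simp
  qed
  have sum_eq: "(\<lambda>i. integral\<^sup>L haar (f i)) sums (1 / 2 * ((1 - r0) / (1 - 2 * r0)))"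
  proof -
    have trm: "complex_of_real (val n) * r0 ^ n = 1/4 * (2 * r0) ^ n + (if n = 0 then 1/4 else 0)" for n
    proof (cases "n = 0")
      case True then show ?thesis by (simp add: val_def)
    next
      case False
      then have "val n = 2 ^ n / 4" by (simp add: val_def)
      then have "complex_of_real (val n) = complex_of_real (2 ^ n / 4)" by (rule arg_cong)
      also have "\<dots> = 2 ^ n / 4" by simp
      finally have "complex_of_real (val n) = 2 ^ n / 4" .
      then show ?thesis using False by (simp add: power_mult_distrib)
    qed
    have "(\<lambda>n. 1/4 * (2 * r0) ^ n + (if n = 0 then 1/4 else 0)) sums (1/4 * (1 / (1 - 2 * r0)) + 1/4)"
      by (intro sums_add sums_mult geometric_sums nr sums_single[of 0 "\<lambda>_. 1/4 :: complex", simplified])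
    moreover have "1/4 * (1 / (1 - 2 * r0)) + 1/4 = 1 / 2 * ((1 - r0) / (1 - 2 * r0))"
    proof -
      have "1 - 2 * r0 \<noteq> 0"
      proof
        assume "1 - 2 * r0 = 0"
        then have "2 * r0 = 1" by simp
        then have "norm (2 * r0) = 1" by simp
        with nr show False by simp
      qed
      then show ?thesis by (simp add: field_simps)
    qed
    ultimately show ?thesis by (simp add: integral_f trm)
  qed
  have I: "integrable haar (\<lambda>y. \<Sum>n. f n y)"
    by (rule integrable_suminf[OF int_f summ1 summ2])
  have J: "(\<integral>y. (\<Sum>n. f n y) \<partial>haar) = (\<Sum>n. integral\<^sup>L haar (f n))"
    by (rule integral_suminf[OF int_f summ1 summ2])
  have G: "(\<lambda>y. complex_of_real (fw w y) * complex_of_real (Hw y) powr (- s)) = (\<lambda>y. \<Sum>n. f n y)"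
    using g_eq by auto
  show ?thesis
    unfolding G using I J sum_eq by (simp add: sums_iff r r0_def)
qed

end
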